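(* For every integer $t\ge 0$, $F_{3t+2,\,2t+2}=1$ and $F_{5t+4,\,2t+2}=1$.
   Context: Define maps $G,S:\mathbb Z^2\to\mathbb Z^2$ by $G(x,y)=(x+y,y)$ and $S(x,y)=(3x-2y+1,\,2x-y+1)$. Define the array $(F_{n,k})_{n,k\ge 0}$ by $F_{0,0}=1$ and, for $(n,k)\neq(0,0)$, $F_{n,k}$ is the number of finite words $w=w_1w_2\cdots w_m$ ($m\ge 0$) over the alphabet $\{G,S\}$ with $w_1\circ w_2\circ\cdots\circ w_m(1,1)=(n,k)$ (the empty word acts as the identity). Equivalently: start with all entries $0$, set $F_{0,0}=1$ and $F_{1,1}=1$, and thereafter, whenever an entry $F_{n,k}$ with $n\ge 1$ changes its value, increase $F_{n+k,k}$ and $F_{3n+1-2k,\,2n+1-k}$ by $1$. *)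

theory Defs
  imports Main
begin

datatype letter = G | S

fun act :: "letter \<Rightarrow> int \<times> int \<Rightarrow> int \<times> int" where
  "act G (x, y) = (x + y, y)"
| "act S (x, y) = (3*x - 2*y + 1, 2*x - y + 1)"

definition word_act :: "letter list \<Rightarrow> int \<times> int \<Rightarrow> int \<times> int" where
  "word_act w p = foldr act w p"

definition F :: "nat \<Rightarrow> nat \<Rightarrow> nat" where
  "F n k = (if (n, k) = (0, 0) then 1
            else card {w. word_act w (1, 1) = (int n, int k)})"

end

theory Submission
  imports Defs
begin

lemma wa_nil[simp]: "word_act [] p = p"
  by (simp add: word_act_def)

lemma wa_cons[simp]: "word_act (a # w) p = act a (word_act w p)"
  by (simp add: word_act_def)

lemma inv: "word_act w (1,1) = (x, y) \<Longrightarrow> y \<ge> 1 \<and> x \<ge> y"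
proof (induction w arbitrary: x y)
  case Nil then show ?case by simp
next
  case (Cons a w)
  obtain x0 y0 where p: "word_act w (1,1) = (x0, y0)" by (cases "word_act w (1,1)")
  with Cons.IH have h: "y0 \<ge> 1 \<and> x0 \<ge> y0" by blast
  show ?case using Cons.prems p h by (cases a) auto
qed

lemma inj_wa: "\<forall>v. word_act w (1,1) = word_act v (1,1) \<longrightarrow> w = v"
proof (induction w)
  case Nil
  show ?case
  proof (intro allI impI)
    fix v assume e: "word_act [] (1,1) = word_act v (1,1)"
    show "[] = v"
    proof (cases v)
      case (Cons b u)
      obtain x0 y0 where p: "word_act u (1,1) = (x0, y0)" by (cases "word_act u (1,1)")
      have h: "y0 \<ge> 1 \<and> x0 \<ge> y0" using inv[OF p] .
      show ?thesis using e p h Cons by (cases b) auto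
    qed simp
  qed
next
  case (Cons a w)
  show ?case
  proof (intro allI impI)
    fix v assume e: "word_act (a # w) (1,1) = word_act v (1,1)"
    obtain x0 y0 where p: "word_act w (1,1) = (x0, y0)" by (cases "word_act w (1,1)")
    have h: "y0 \<ge> 1 \<and> x0 \<ge> y0" using inv[OF p] .
    show "a # w = v"
    proof (cases v)
      case Nil
      then show ?thesis using e p h by (cases a) auto
    next
      case (Cons b u)
      obtain x1 y1 where q: "word_act u (1,1) = (x1, y1)" by (cases "word_act u (1,1)")
      have h1: "y1 \<ge> 1 \<and> x1 \<ge> y1" using inv[OF q] .
      have ab: "a = b \<and> x0 = x1 \<and> y0 = y1"
        using e p q h h1 Cons by (cases a; cases b) auto
      then have "w = u" using Cons.IH p q by auto
      then show ?thesis using ab Cons by simp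
    qed
  qed
qed

lemma repG: "word_act (replicate t G) (1,1) = (1 + int t, 1)"
  by (induction t) auto

lemma F_one:
  assumes "word_act w0 (1,1) = (int n, int k)" "(n, k) \<noteq> (0, 0)"
  shows "F n k = 1"
proof -
  have "{w. word_act w (1,1) = (int n, int k)} = {w0}"
    using assms(1) inj_wa by auto
  then show ?thesis using assms(2) by (simp add: F_def)
qed

lemma wordA: "word_act (S # replicate t G) (1,1) = (int (3*t+2), int (2*t+2))"
  using repG[of t] by simp

lemma wordB: "word_act (G # S # replicate t G) (1,1) = (int (5*t+4), int (2*t+2))"
  using repG[of t] by simp

lemma FA: "F (3*t + 2) (2*t + 2) = 1"
  using F_one[OF wordA] by simp

lemma FB: "F (5*t + 4) (2*t + 2) = 1"
  using F_one[OF wordB] by simp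

theorem corollary15:
  fixes t :: nat
  shows "F (3*t + 2) (2*t + 2) = 1 \<and> F (5*t + 4) (2*t + 2) = 1"
  using FA FB by blast

end
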